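(* Let $0<r<1$ and $c>0$. For every extremally disconnected set $S$, the set $C(S,\mathbb{Z}((T))_{r,\le c})$ of continuous maps from $S$ to the topological space $\mathbb{Z}((T))_{r,\le c}$ is identified (via $F\mapsto$ its coefficient functions) with the set of formal sums $\sum_{n\ge k}a_nT^n$, for some $k\in\mathbb{Z}$, with $a_n\in C(S,\mathbb{Z})$ and $\sum_n|a_n(s)|r^n\le c$ for all $s\in S$. In other words, the condensed set defined by the latter sets is the condensation of the topological space $\mathbb{Z}((T))_{r,\le c}$.
   Context: $\mathbb{Z}((T))_{r,\le c}$ is the set of integer Laurent series $\sum_{n\gg-\infty}a_nT^n$ ($a_n\in\mathbb{Z}$, $a_n=0$ for $n$ sufficiently negative) with $\sum|a_n|r^n\le c$, topologized by the $T$-adic norm $\|f\|=\delta^{v_T(f)}$ for a fixed $\delta\in(0,1)$, where $v_T(f)$ is the smallest $n$ with $a_n\ne 0$ (so two series are close iff their coefficients agree up to a large index). An extremally disconnected set is a projective object in compact Hausdorff spaces; the condensation of a T1 space $X$ is $S\mapsto C(S,X)$. $\mathbb{Z}$ carries the discrete topology. *)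

theory Defs
  imports "HOL-Analysis.Analysis"
begin

text \<open>Integer Laurent series are modelled as coefficient functions int => int whose
support is bounded below.\<close>

definition laurent_r_c :: "real \<Rightarrow> real \<Rightarrow> (int \<Rightarrow> int) set" where
  "laurent_r_c r c = {f. (\<exists>k. \<forall>n<k. f n = 0)
      \<and> (\<lambda>n. real_of_int \<bar>f n\<bar> * r powi n) summable_on UNIV
      \<and> (\<Sum>\<^sub>\<infinity>n. real_of_int \<bar>f n\<bar> * r powi n) \<le> c}"

text \<open>T-adic valuation: smallest index with nonzero coefficient (used for nonzero series).\<close>
definition tval :: "(int \<Rightarrow> int) \<Rightarrow> int" where
  "tval h = Inf {n. h n \<noteq> 0}"

definition Tnorm :: "real \<Rightarrow> (int \<Rightarrow> int) \<Rightarrow> real" where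
  "Tnorm \<delta> h = (if h = (\<lambda>_. 0) then 0 else \<delta> powi tval h)"

definition laurent_topology :: "real \<Rightarrow> real \<Rightarrow> real \<Rightarrow> (int \<Rightarrow> int) topology" where
  "laurent_topology \<delta> r c = topology (\<lambda>U. U \<subseteq> laurent_r_c r c \<and>
      (\<forall>f\<in>U. \<exists>e>0. \<forall>g\<in>laurent_r_c r c. Tnorm \<delta> (\<lambda>n. g n - f n) < e \<longrightarrow> g \<in> U))"

text \<open>Extremally disconnected compact Hausdorff space (= projective compact Hausdorff
space, by Gleason's theorem).\<close>
definition extremally_disconnected :: "'a topology \<Rightarrow> bool" where
  "extremally_disconnected S \<longleftrightarrow> compact_space S \<and> Hausdorff_space S \<and>
      (\<forall>U. openin S U \<longrightarrow> openin S (S closure_of U))"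

end

theory Submission
  imports Defs
begin

lemma lt_istop:
  "istopology (\<lambda>U. U \<subseteq> L \<and>
      (\<forall>f\<in>U. \<exists>e>0. \<forall>g\<in>L. Tnorm \<delta> (\<lambda>n. g n - f n) < e \<longrightarrow> g \<in> U))"
  unfolding istopology_def
proof (rule conjI; intro allI impI)
  fix S T :: "(int \<Rightarrow> int) set"
  assume S: "S \<subseteq> L \<and> (\<forall>f\<in>S. \<exists>e>0. \<forall>g\<in>L. Tnorm \<delta> (\<lambda>n. g n - f n) < e \<longrightarrow> g \<in> S)"
    and T: "T \<subseteq> L \<and> (\<forall>f\<in>T. \<exists>e>0. \<forall>g\<in>L. Tnorm \<delta> (\<lambda>n. g n - f n) < e \<longrightarrow> g \<in> T)"
  show "S \<inter> T \<subseteq> L \<and> (\<forall>f\<in>S \<inter> T. \<exists>e>0. \<forall>g\<in>L. Tnorm \<delta> (\<lambda>n. g n - f n) < e \<longrightarrow> g \<in> S \<inter> T)"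
  proof (intro conjI ballI)
    show "S \<inter> T \<subseteq> L" using S by blast
    fix f assume "f \<in> S \<inter> T"
    then obtain e1 e2 where "e1 > 0" "e2 > 0"
      "\<forall>g\<in>L. Tnorm \<delta> (\<lambda>n. g n - f n) < e1 \<longrightarrow> g \<in> S"
      "\<forall>g\<in>L. Tnorm \<delta> (\<lambda>n. g n - f n) < e2 \<longrightarrow> g \<in> T" using S T by blast
    then show "\<exists>e>0. \<forall>g\<in>L. Tnorm \<delta> (\<lambda>n. g n - f n) < e \<longrightarrow> g \<in> S \<inter> T"
      by (intro exI[of _ "min e1 e2"]) auto
  qed
next
  fix KK :: "(int \<Rightarrow> int) set set"
  assume "\<forall>K\<in>KK. K \<subseteq> L \<and> (\<forall>f\<in>K. \<exists>e>0. \<forall>g\<in>L. Tnorm \<delta> (\<lambda>n. g n - f n) < e \<longrightarrow> g \<in> K)"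
  note H = this
  show "\<Union>KK \<subseteq> L \<and> (\<forall>f\<in>\<Union>KK. \<exists>e>0. \<forall>g\<in>L. Tnorm \<delta> (\<lambda>n. g n - f n) < e \<longrightarrow> g \<in> \<Union>KK)"
  proof (intro conjI ballI)
    show "\<Union>KK \<subseteq> L" using H by blast
    fix f assume "f \<in> \<Union>KK"
    then obtain K where K: "K \<in> KK" "f \<in> K" by blast
    then obtain e where "e > 0" "\<forall>g\<in>L. Tnorm \<delta> (\<lambda>n. g n - f n) < e \<longrightarrow> g \<in> K"
      using H by meson
    then show "\<exists>e>0. \<forall>g\<in>L. Tnorm \<delta> (\<lambda>n. g n - f n) < e \<longrightarrow> g \<in> \<Union>KK"
      using K by (intro exI[of _ e]) auto
  qed
qed

lemma openin_lt:
  "openin (laurent_topology \<delta> r c) U \<longleftrightarrow> U \<subseteq> laurent_r_c r c \<and>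
      (\<forall>f\<in>U. \<exists>e>0. \<forall>g\<in>laurent_r_c r c. Tnorm \<delta> (\<lambda>n. g n - f n) < e \<longrightarrow> g \<in> U)"
  unfolding laurent_topology_def using lt_istop by simp

lemma topspace_lt: "topspace (laurent_topology \<delta> r c) = laurent_r_c r c"
proof -
  have "openin (laurent_topology \<delta> r c) (laurent_r_c r c)"
    unfolding openin_lt by (auto intro: exI[of _ 1])
  then show ?thesis unfolding topspace_def using openin_lt by blast
qed

lemma Tnorm_small:
  assumes "0 < \<delta>" "\<delta> \<le> 1" "\<forall>m<N. h m = 0"
  shows "Tnorm \<delta> h \<le> \<delta> powi N"
proof (cases "h = (\<lambda>_. 0)")
  case True then show ?thesis using assms by (simp add: Tnorm_def)
next
  case False
  then have ne: "{n. h n \<noteq> 0} \<noteq> {}" by auto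
  have "N \<le> tval h" unfolding tval_def
    by (rule cInf_greatest[OF ne]) (use assms(3) in force)
  then have "\<delta> powi tval h \<le> \<delta> powi N"
    using assms by (intro power_int_decreasing) auto
  then show ?thesis using False by (simp add: Tnorm_def)
qed

lemma Tnorm_big:
  assumes "0 < \<delta>" "\<delta> \<le> 1" "bdd_below {n. h n \<noteq> 0}" "Tnorm \<delta> h < \<delta> powi N" "m < N"
  shows "h m = 0"
proof (rule ccontr)
  assume hm: "h m \<noteq> 0"
  then have F: "h \<noteq> (\<lambda>_. 0)" by auto
  have "tval h \<le> m" unfolding tval_def using hm assms(3) by (intro cInf_lower) auto
  then have "\<delta> powi N \<le> \<delta> powi tval h"
    using assms by (intro power_int_decreasing) auto
  then show False using assms(4) F by (simp add: Tnorm_def)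
qed

lemma small_pow: fixes \<delta> e :: real assumes "0 < \<delta>" "\<delta> < 1" "e > 0" shows "\<exists>N::int. \<delta> powi N < e"
proof -
  obtain n where "\<delta> ^ n < e" using real_arch_pow_inv[OF assms(3) assms(2)] by blast
  then show ?thesis by (intro exI[of _ "int n"]) simp
qed

lemma discrete_cont:
  "continuous_map S (discrete_topology (UNIV :: int set)) g \<longleftrightarrow>
     (\<forall>s\<in>topspace S. openin S {t\<in>topspace S. g t = g s})"
proof
  assume "continuous_map S (discrete_topology (UNIV :: int set)) g"
  then show "\<forall>s\<in>topspace S. openin S {t\<in>topspace S. g t = g s}"
  proof (intro ballI)
    fix s assume "s \<in> topspace S"
    have "openin (discrete_topology (UNIV :: int set)) {g s}" by simp
    then have "openin S {t\<in>topspace S. g t \<in> {g s}}"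
      using \<open>continuous_map S (discrete_topology (UNIV :: int set)) g\<close>
      by (rule openin_continuous_map_preimage[rotated])
    then show "openin S {t\<in>topspace S. g t = g s}" by simp
  qed
next
  assume H: "\<forall>s\<in>topspace S. openin S {t\<in>topspace S. g t = g s}"
  show "continuous_map S (discrete_topology (UNIV :: int set)) g"
    unfolding continuous_map_def
  proof (intro conjI allI impI ballI)
    fix U :: "int set"
    show "openin S {x \<in> topspace S. g x \<in> U}"
    proof (subst openin_subopen, intro ballI)
      fix x assume x: "x \<in> {x \<in> topspace S. g x \<in> U}"
      show "\<exists>T. openin S T \<and> x \<in> T \<and> T \<subseteq> {x \<in> topspace S. g x \<in> U}"
        by (rule exI[of _ "{t\<in>topspace S. g t = g x}"]) (use H x in auto)
    qed
  qed simp
qed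

lemma fin_fibers_open:
  assumes "finite I" "\<And>n. n \<in> I \<Longrightarrow> openin S {t\<in>topspace S. P n t}"
  shows "openin S {t\<in>topspace S. \<forall>n\<in>I. P n t}"
proof -
  have "{t\<in>topspace S. \<forall>n\<in>I. P n t} = (\<Inter>n\<in>I. {t\<in>topspace S. P n t}) \<inter> topspace S" by auto
  then show ?thesis using openin_INT[OF assms] by simp
qed

lemma L_bdd:
  assumes "f \<in> laurent_r_c r c" "g \<in> laurent_r_c r c"
  shows "bdd_below {n. g n - f n \<noteq> 0}"
proof -
  obtain k1 where k1: "\<forall>n<k1. f n = 0" using assms(1) by (auto simp: laurent_r_c_def)
  obtain k2 where k2: "\<forall>n<k2. g n = 0" using assms(2) by (auto simp: laurent_r_c_def)
  show ?thesis unfolding bdd_below_def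
  proof (rule exI[of _ "min k1 k2"], intro ballI)
    fix n assume "n \<in> {n. g n - f n \<noteq> 0}"
    then have "g n \<noteq> 0 \<or> f n \<noteq> 0" by auto
    then show "min k1 k2 \<le> n"
    proof
      assume "g n \<noteq> 0" then have "k2 \<le> n" using k2 not_less by blast
      then show ?thesis by simp
    next
      assume "f n \<noteq> 0" then have "k1 \<le> n" using k1 not_less by blast
      then show ?thesis by simp
    qed
  qed
qed

lemma cyl_open:
  assumes "0 < \<delta>" "\<delta> \<le> 1"
  shows "openin (laurent_topology \<delta> r c) {g \<in> laurent_r_c r c. \<forall>m<N. g m = f m}"
  unfolding openin_lt
proof (intro conjI ballI)
  fix g assume g: "g \<in> {g \<in> laurent_r_c r c. \<forall>m<N. g m = f m}"
  show "\<exists>e>0. \<forall>g'\<in>laurent_r_c r c. Tnorm \<delta> (\<lambda>n. g' n - g n) < e \<longrightarrow> g' \<in> {g \<in> laurent_r_c r c. \<forall>m<N. g m = f m}"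
  proof (intro exI[of _ "\<delta> powi N"] conjI ballI impI)
    show "0 < \<delta> powi N" using assms by simp
    fix g' assume g': "g' \<in> laurent_r_c r c" and T: "Tnorm \<delta> (\<lambda>n. g' n - g n) < \<delta> powi N"
    have "bdd_below {n. g' n - g n \<noteq> 0}" using L_bdd[of g r c g'] g g' by simp
    then have "\<forall>m<N. g' m - g m = 0" using Tnorm_big[OF assms _ T] by blast
    then show "g' \<in> {g \<in> laurent_r_c r c. \<forall>m<N. g m = f m}" using g g' by auto
  qed
qed auto

theorem mainTheorem11:
  fixes r c \<delta> :: real and S :: "'a topology"
  assumes "0 < r" "r < 1" "0 < c" "0 < \<delta>" "\<delta> < 1"
    and "extremally_disconnected S"
  shows "bij_betw (\<lambda>F n s. F s n)
     {F :: 'a \<Rightarrow> int \<Rightarrow> int. continuous_map S (laurent_topology \<delta> r c) F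
        \<and> (\<forall>s. s \<notin> topspace S \<longrightarrow> F s = (\<lambda>_. 0))}
     {a :: int \<Rightarrow> 'a \<Rightarrow> int. (\<exists>k. \<forall>n<k. \<forall>s. a n s = 0)
        \<and> (\<forall>n. continuous_map S (discrete_topology (UNIV :: int set)) (a n))
        \<and> (\<forall>n s. s \<notin> topspace S \<longrightarrow> a n s = 0)
        \<and> (\<forall>s\<in>topspace S. (\<lambda>n. real_of_int \<bar>a n s\<bar> * r powi n) summable_on UNIV
              \<and> (\<Sum>\<^sub>\<infinity>n. real_of_int \<bar>a n s\<bar> * r powi n) \<le> c)}"
proof -
  have d: "0 < \<delta>" "\<delta> \<le> 1" using assms by auto
  have cpt: "compact_space S" using assms(6) by (simp add: extremally_disconnected_def)
  let ?L = "laurent_r_c r c"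
  let ?LT = "laurent_topology \<delta> r c"
  let ?A = "{F :: 'a \<Rightarrow> int \<Rightarrow> int. continuous_map S (laurent_topology \<delta> r c) F
        \<and> (\<forall>s. s \<notin> topspace S \<longrightarrow> F s = (\<lambda>_. 0))}"
  let ?B = "{a :: int \<Rightarrow> 'a \<Rightarrow> int. (\<exists>k. \<forall>n<k. \<forall>s. a n s = 0)
        \<and> (\<forall>n. continuous_map S (discrete_topology (UNIV :: int set)) (a n))
        \<and> (\<forall>n s. s \<notin> topspace S \<longrightarrow> a n s = 0)
        \<and> (\<forall>s\<in>topspace S. (\<lambda>n. real_of_int \<bar>a n s\<bar> * r powi n) summable_on UNIV
              \<and> (\<Sum>\<^sub>\<infinity>n. real_of_int \<bar>a n s\<bar> * r powi n) \<le> c)}"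
  have inj: "inj_on (\<lambda>F n s. F s n) ?A"
    by (rule inj_onI) (metis ext)
  have sub1: "(\<lambda>F n s. F s n) ` ?A \<subseteq> ?B"
  proof
    fix x assume "x \<in> (\<lambda>F n s. F s n) ` ?A"
    then obtain F where F: "continuous_map S ?LT F" "\<forall>s. s \<notin> topspace S \<longrightarrow> F s = (\<lambda>_. 0)"
      and xF: "x = (\<lambda>n s. F s n)" by blast
    have FL: "\<forall>s\<in>topspace S. F s \<in> ?L"
      using F(1) unfolding continuous_map_def topspace_lt by blast
    have pre: "openin S {t\<in>topspace S. F t \<in> {g \<in> ?L. \<forall>m<N. g m = f m}}" for N f
      using F(1) cyl_open[OF d] unfolding continuous_map_def by blast
    have cont: "continuous_map S (discrete_topology (UNIV :: int set)) (\<lambda>s. F s n)" for n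
      unfolding discrete_cont
    proof (intro ballI)
      fix s assume s: "s \<in> topspace S"
      show "openin S {t \<in> topspace S. F t n = F s n}"
      proof (subst openin_subopen, intro ballI)
        fix t assume t: "t \<in> {t \<in> topspace S. F t n = F s n}"
        have o: "openin S {t'\<in>topspace S. F t' \<in> {g \<in> ?L. \<forall>m<n+1. g m = F t m}}" by (rule pre)
        show "\<exists>T. openin S T \<and> t \<in> T \<and> T \<subseteq> {t \<in> topspace S. F t n = F s n}"
          by (rule exI[of _ "{t'\<in>topspace S. F t' \<in> {g \<in> ?L. \<forall>m<n+1. g m = F t m}}"])
             (use o t FL in auto)
      qed
    qed
    have unif: "\<exists>k. \<forall>n<k. \<forall>s. F s n = 0"
    proof -
      define ks where "ks s = (SOME k. \<forall>n<k. F s n = 0)" for s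
      have ks: "\<forall>n<ks s. F s n = 0" if "s \<in> topspace S" for s
      proof -
        have "\<exists>k. \<forall>n<k. F s n = 0" using FL that by (auto simp: laurent_r_c_def)
        then show ?thesis unfolding ks_def by (rule someI_ex)
      qed
      define V where "V s = {t\<in>topspace S. F t \<in> {g \<in> ?L. \<forall>m<ks s. g m = F s m}}" for s
      have "\<exists>\<F>. finite \<F> \<and> \<F> \<subseteq> V ` topspace S \<and> topspace S \<subseteq> \<Union>\<F>"
        using cpt unfolding compact_space_alt
      proof (elim allE impE)
        show "(\<forall>U\<in>V ` topspace S. openin S U) \<and> topspace S \<subseteq> \<Union> (V ` topspace S)"
          using pre FL unfolding V_def by auto
      qed
      then obtain T where T: "finite T" "T \<subseteq> topspace S" "topspace S \<subseteq> \<Union>(V ` T)"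
        by (metis finite_subset_image)
      define k where "k = Min (insert 0 (ks ` T))"
      have kle: "k \<le> ks s" if "s \<in> T" for s
        unfolding k_def using T(1) that by (intro Min_le) auto
      show ?thesis
      proof (intro exI allI impI)
        fix n s assume n: "n < k"
        show "F s n = 0"
        proof (cases "s \<in> topspace S")
          case True
          then obtain s0 where s0: "s0 \<in> T" "s \<in> V s0" using T(3) by blast
          then have "F s n = F s0 n" using kle[OF s0(1)] n unfolding V_def by auto
          also have "\<dots> = 0" using ks[of s0] s0 T(2) kle[OF s0(1)] n by auto
          finally show ?thesis .
        next
          case False then show ?thesis using F(2) by simp
        qed
      qed
    qed
    have summ: "\<forall>s\<in>topspace S. (\<lambda>n. real_of_int \<bar>F s n\<bar> * r powi n) summable_on UNIV
              \<and> (\<Sum>\<^sub>\<infinity>n. real_of_int \<bar>F s n\<bar> * r powi n) \<le> c"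
      using FL by (auto simp: laurent_r_c_def)
    show "x \<in> ?B" unfolding xF using unif cont summ F(2) by auto
  qed
  have sub2: "?B \<subseteq> (\<lambda>F n s. F s n) ` ?A"
  proof
    fix a assume a: "a \<in> ?B"
    then obtain k where k: "\<forall>n<k. \<forall>s. a n s = 0" by blast
    have ac: "\<forall>n. continuous_map S (discrete_topology (UNIV :: int set)) (a n)" using a by blast
    define F where "F s n = a n s" for s n
    have FL: "F s \<in> ?L" if "s \<in> topspace S" for s
      using a that k unfolding laurent_r_c_def F_def by auto
    have "continuous_map S ?LT F"
      unfolding continuous_map_def topspace_lt
    proof (intro conjI allI impI funcsetI)
      fix s assume "s \<in> topspace S" then show "F s \<in> ?L" by (rule FL)
    next
      fix U assume U: "openin ?LT U"
      show "openin S {x \<in> topspace S. F x \<in> U}"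
      proof (subst openin_subopen, intro ballI)
        fix s assume s: "s \<in> {x \<in> topspace S. F x \<in> U}"
        then obtain e where e: "e > 0" "\<forall>g\<in>?L. Tnorm \<delta> (\<lambda>n. g n - F s n) < e \<longrightarrow> g \<in> U"
          using U unfolding openin_lt by blast
        obtain N where N: "\<delta> powi N < e" using small_pow[OF assms(4,5) e(1)] by blast
        define V where "V = {t\<in>topspace S. \<forall>n\<in>{k..<N}. a n t = a n s}"
        have Vo: "openin S V" unfolding V_def
          by (rule fin_fibers_open) (use ac s in \<open>auto simp: discrete_cont\<close>)
        have "V \<subseteq> {x \<in> topspace S. F x \<in> U}"
        proof
          fix t assume t: "t \<in> V"
          have agree: "\<forall>m<N. F t m - F s m = 0"
          proof (intro allI impI)
            fix m assume "m < N"
            then show "F t m - F s m = 0"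
              using t k unfolding V_def F_def by (cases "m < k") auto
          qed
          have "Tnorm \<delta> (\<lambda>n. F t n - F s n) \<le> \<delta> powi N" using Tnorm_small[OF d agree] .
          then have "Tnorm \<delta> (\<lambda>n. F t n - F s n) < e" using N by linarith
          then show "t \<in> {x \<in> topspace S. F x \<in> U}" using e(2) FL t unfolding V_def by auto
        qed
        moreover have "s \<in> V" using s unfolding V_def by auto
        ultimately show "\<exists>T. openin S T \<and> s \<in> T \<and> T \<subseteq> {x \<in> topspace S. F x \<in> U}"
          using Vo by blast
      qed
    qed
    moreover have "\<forall>s. s \<notin> topspace S \<longrightarrow> F s = (\<lambda>_. 0)" using a unfolding F_def by auto
    ultimately have "F \<in> ?A" by blast
    moreover have "a = (\<lambda>n s. F s n)" unfolding F_def by simp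
    ultimately show "a \<in> (\<lambda>F n s. F s n) ` ?A" by blast
  qed
  show ?thesis unfolding bij_betw_def using inj sub1 sub2 by blast
qed

end
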